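(* Let $\kappa:\mathbb{R}^d\times\mathbb{R}^d\to\mathbb{R}$ be a kernel with reproducing kernel Hilbert space $\mathcal{H}_\kappa$, and assume $\kappa(\mathbf{x},\mathbf{x})=1$ for all $\mathbf{x}$. Let $(\mathbf{x}_1,y_1),\ldots,(\mathbf{x}_T,y_T)$ be a sequence of examples with $\mathbf{x}_t\in\mathbb{R}^d$ and $y_t\in\{-1,+1\}$, and let $\ell_t(f)=\max(0,1-y_tf(\mathbf{x}_t))$ be the hinge loss, assumed $1$-Lipschitz with respect to $\|\cdot\|_{\mathcal{H}_\kappa}$. Let $f_*\in\arg\min_{f\in\mathcal{H}_\kappa}\sum_{t=1}^T\ell_t(f)$. Let $\beta\ge\alpha>0$ and $\eta>0$, and let $f_1,\ldots,f_T$ be generated by the SPA (Sparse Passive Aggressive) update described in the context. Then $$\mathbb{E}\Big[\sum_{t=1}^T\big(\ell_t(f_t)-\ell_t(f_* )\big)\Big]<\frac{1}{2\eta}\|f_*\|^2_{\mathcal{H}_\kappa}+\frac{\eta\beta}{\min(\alpha,\sqrt{\beta\eta})}\,T .$$ Moreover, if $\eta=\|f_*\|_{\mathcal{H}_\kappa}\sqrt{\frac{\alpha}{2\beta T}}$ and $\alpha^3\le\frac{\beta}{2T}\|f_*\|^2_{\mathcal{H}_\kappa}$, then $$\mathbb{E}\Big[\sum_{t=1}^T\big(\ell_t(f_t)-\ell_t(f_* )\big)\Big]<\|f_*\|_{\mathcal{H}_\kappa}\sqrt{2\beta T/\alpha}.$$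
   Context: SPA update (single kernel): start with $f_1=0\in\mathcal{H}_\kappa$. At each round $t=1,\ldots,T$, compute $\rho_t=\min(\alpha,\ell_t(f_t))/\beta$ and draw a random variable $Z_t\in\{0,1\}$ with $\Pr(Z_t=1\mid Z_1,\ldots,Z_{t-1})=\rho_t$. Then set $$f_{t+1}=\arg\min_{f\in\mathcal{H}_\kappa}\ \frac12\|f-f_t\|^2_{\mathcal{H}_\kappa}+\frac{Z_t}{\rho_t}\,\eta\,\ell_t(f),$$ with the convention $Z_t/\rho_t=0$ when $\rho_t=0$. Equivalently, $f_{t+1}=f_t+\tau_ty_t\kappa(\mathbf{x}_t,\cdot)$ with $\tau_t=\min\big(\eta Z_t/\rho_t,\ \ell_t(f_t)/\kappa(\mathbf{x}_t,\mathbf{x}_t)\big)$. The expectation is over the random variables $Z_1,\ldots,Z_T$. *)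

theory Defs
  imports "HOL-Analysis.Analysis" "HOL-Probability.Probability"
begin

text \<open>RKHS modelled abstractly: a Hilbert space 'h together with the canonical feature map
  k x = kappa(x, .), so that f(x) = f \<bullet> k x (reproducing property).
  Rounds are 0-indexed: round t (t < T) uses example (kx t, y t), where kx t = k (x t).\<close>

definition hinge :: "'h::real_inner \<Rightarrow> real \<Rightarrow> 'h \<Rightarrow> real" where
  "hinge kxt yt f = max 0 (1 - yt * (f \<bullet> kxt))"

definition spa_rho :: "real \<Rightarrow> real \<Rightarrow> ('h::real_inner) \<Rightarrow> real \<Rightarrow> 'h \<Rightarrow> real" where
  "spa_rho \<alpha> \<beta> kxt yt f = min \<alpha> (hinge kxt yt f) / \<beta>"

text \<open>Step size tau_t = min(eta Z_t / rho_t, l_t(f_t) / kappa(x_t,x_t)), with Z_t/rho_t = 0 if rho_t = 0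
  (in HOL, eta / 0 = 0).\<close>
definition spa_tau :: "real \<Rightarrow> real \<Rightarrow> real \<Rightarrow> ('h::real_inner) \<Rightarrow> real \<Rightarrow> 'h \<Rightarrow> bool \<Rightarrow> real" where
  "spa_tau \<alpha> \<beta> \<eta> kxt yt f z =
     (if z then min (\<eta> / spa_rho \<alpha> \<beta> kxt yt f) (hinge kxt yt f / (kxt \<bullet> kxt)) else 0)"

text \<open>spa_f ... z n is the iterate f_{n+1} (so spa_f ... z 0 = f_1 = 0), driven by Z-values z 0, ..., z (n-1).\<close>
primrec spa_f :: "real \<Rightarrow> real \<Rightarrow> real \<Rightarrow> (nat \<Rightarrow> 'h::real_inner) \<Rightarrow> (nat \<Rightarrow> real) \<Rightarrow> (nat \<Rightarrow> bool) \<Rightarrow> nat \<Rightarrow> 'h" where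
  "spa_f \<alpha> \<beta> \<eta> kx y z 0 = 0"
| "spa_f \<alpha> \<beta> \<eta> kx y z (Suc n) =
     (let f = spa_f \<alpha> \<beta> \<eta> kx y z n
      in f + (spa_tau \<alpha> \<beta> \<eta> (kx n) (y n) f (z n) * y n) *\<^sub>R kx n)"

text \<open>Joint law of (Z_0, ..., Z_{n-1}) (other coordinates False): Z_n is Bernoulli(rho_n) given the past.\<close>
primrec spa_Z :: "real \<Rightarrow> real \<Rightarrow> real \<Rightarrow> (nat \<Rightarrow> 'h::real_inner) \<Rightarrow> (nat \<Rightarrow> real) \<Rightarrow> nat \<Rightarrow> (nat \<Rightarrow> bool) pmf" where
  "spa_Z \<alpha> \<beta> \<eta> kx y 0 = return_pmf (\<lambda>_. False)"
| "spa_Z \<alpha> \<beta> \<eta> kx y (Suc n) =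
     bind_pmf (spa_Z \<alpha> \<beta> \<eta> kx y n) (\<lambda>z.
       bind_pmf (bernoulli_pmf (spa_rho \<alpha> \<beta> (kx n) (y n) (spa_f \<alpha> \<beta> \<eta> kx y z n))) (\<lambda>b.
         return_pmf (z(n := b))))"

end

theory Submission
  imports Defs
begin

lemma core:
  fixes l ls rho eta tau D D1 :: real
  assumes "l > 0" "ls \<ge> 0" "rho > 0" "eta > 0" "tau = min (eta/rho) l"
    "D1 \<le> D - 2 * tau * (l - ls) + tau^2"
  shows "l - ls \<le> rho * (D - D1) / (2*eta) + min l (eta / (2*rho))"
proof -
  define c where "c = eta / rho"
  have c: "c > 0" using assms by (simp add: c_def)
  have rc: "rho / eta = 1 / c" using assms by (simp add: c_def)
  have e2: "eta / (2*rho) = c/2" by (simp add: c_def)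
  have "rho * (D - D1) / (2*eta) = (D - D1) / (2*c)" using rc assms c
    by (simp add: c_def field_simps)
  also have "\<dots> \<ge> (2 * tau * (l - ls) - tau^2) / (2*c)"
    using assms c by (intro divide_right_mono) auto
  finally have h: "rho * (D - D1) / (2*eta) \<ge> (2 * tau * (l - ls) - tau^2) / (2*c)" .
  have "l - ls \<le> (2 * tau * (l - ls) - tau^2) / (2*c) + min l (c/2)"
  proof (cases "c \<le> l")
    case True
    then have "tau = c" using assms by (simp add: c_def)
    then show ?thesis using True c by (simp add: field_simps power2_eq_square)
  next
    case False
    then have t: "tau = l" using assms by (simp add: c_def)
    have "2*c*(l - ls) \<le> 2 * l * (l - ls) - l^2 + min (2*c*l) (c^2)"
    proof -
      have a: "2*(c-l)*(l-ls) \<le> 2*(c-l)*l" using False assms by (intro mult_left_mono) auto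
      have b: "2*c*l - l^2 \<le> c^2" proof - have "0 \<le> (c-l)^2" by simp then show ?thesis by (simp add: power2_eq_square algebra_simps) qed
      have ll: "0 \<le> l*l" by simp  show ?thesis using a b ll unfolding min_def power2_eq_square by (smt (verit) left_diff_distrib right_diff_distrib mult.commute mult.assoc)
    qed
    then have "2*c*(l - ls) / (2*c) \<le> (2 * l * (l - ls) - l^2 + min (2*c*l) (c^2)) / (2*c)"
      using c by (intro divide_right_mono) auto
    moreover have "min (2*c*l) (c^2) / (2*c) = min l (c/2)" using c
      by (auto simp: min_def power2_eq_square field_simps)
    ultimately show ?thesis using c t by (simp add: add_divide_distrib diff_divide_distrib)
  qed
  then show ?thesis using h e2 by linarith
qed

lemma minbound:
  fixes l \<alpha> \<beta> \<eta> :: real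
  assumes "l > 0" "0 < \<alpha>" "\<alpha> \<le> \<beta>" "0 < \<eta>"
  shows "min l (\<eta> / (2 * (min \<alpha> l / \<beta>))) \<le> max (sqrt (\<eta>*\<beta>/2)) (\<eta>*\<beta>/(2*\<alpha>))"
proof (cases "l \<le> \<alpha>")
  case True
  define s where "s = sqrt (\<eta>*\<beta>/2)"
  have s2: "s^2 = \<eta>*\<beta>/2" using assms by (simp add: s_def)
  have sp: "s > 0" using assms by (simp add: s_def)
  have e: "\<eta> / (2 * (min \<alpha> l / \<beta>)) = s^2 / l" using True assms s2 by (simp add: min_def field_simps)
  have m: "min l (s^2/l) \<le> s"
  proof (cases "l \<le> s")
    case True then show ?thesis by simp
  next
    case False
    then have "s^2 / l \<le> s" using sp assms by (simp add: power2_eq_square field_simps mult_left_mono)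
    then show ?thesis by simp
  qed
  show ?thesis unfolding e s_def[symmetric] by (rule order_trans[OF m max.cobounded1])
next
  case False
  then have "\<eta> / (2 * (min \<alpha> l / \<beta>)) = \<eta>*\<beta>/(2*\<alpha>)" using assms by (simp add: min_def field_simps)
  then show ?thesis by (metis max.cobounded2 min.cobounded2 order_trans)
qed

lemma step:
  fixes kv f fs :: "'h::real_inner"
  assumes kv: "kv \<bullet> kv = 1" and yv: "yv \<in> {-1,1}" and a: "0<\<alpha>" "\<alpha>\<le>\<beta>" "0<\<eta>"
  shows "hinge kv yv f - hinge kv yv fs
     + (spa_rho \<alpha> \<beta> kv yv f * (norm (f + (spa_tau \<alpha> \<beta> \<eta> kv yv f True * yv) *\<^sub>R kv - fs))\<^sup>2
        + (1 - spa_rho \<alpha> \<beta> kv yv f) * (norm (f - fs))\<^sup>2) / (2*\<eta>)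
     \<le> (norm (f - fs))\<^sup>2/(2*\<eta>) + max (sqrt (\<eta>*\<beta>/2)) (\<eta>*\<beta>/(2*\<alpha>))"
proof -
  define l where "l = hinge kv yv f"
  define ls where "ls = hinge kv yv fs"
  define \<rho> where "\<rho> = spa_rho \<alpha> \<beta> kv yv f"
  define \<tau> where "\<tau> = spa_tau \<alpha> \<beta> \<eta> kv yv f True"
  define D where "D = (norm (f - fs))\<^sup>2"
  define D1 where "D1 = (norm (f + (\<tau> * yv) *\<^sub>R kv - fs))\<^sup>2"
  define c where "c = max (sqrt (\<eta>*\<beta>/2)) (\<eta>*\<beta>/(2*\<alpha>))"
  have c0: "c \<ge> 0" unfolding c_def using a by (simp add: le_max_iff_disj)
  have l0: "l \<ge> 0" "ls \<ge> 0" by (simp_all add: l_def ls_def hinge_def)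
  have rho: "\<rho> = min \<alpha> l / \<beta>" by (simp add: \<rho>_def l_def spa_rho_def)
  have "l - ls + (\<rho> * D1 + (1 - \<rho>) * D) / (2*\<eta>) \<le> D/(2*\<eta>) + c"
  proof (cases "l = 0")
    case True
    then have "\<rho> = 0" using rho a by simp
    then show ?thesis using True l0 c0 by simp
  next
    case False
    then have lp: "l > 0" using l0 by simp
    have rp: "\<rho> > 0" using rho a lp by simp
    have tau: "\<tau> = min (\<eta>/\<rho>) l" by (simp add: \<tau>_def spa_tau_def kv \<rho>_def l_def)
    have tp: "\<tau> \<ge> 0" using tau rp a lp by simp
    have lf: "l = 1 - yv * (f \<bullet> kv)" using lp unfolding l_def hinge_def by (simp add: max_def split: if_splits)
    have lsf: "ls \<ge> 1 - yv * (fs \<bullet> kv)" unfolding ls_def hinge_def by simp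
    have y2: "yv * yv = 1" using yv by auto
    have "D1 = (norm ((f - fs) + (\<tau> * yv) *\<^sub>R kv))\<^sup>2" by (simp add: D1_def algebra_simps)
    also have "\<dots> = ((f - fs) + (\<tau> * yv) *\<^sub>R kv) \<bullet> ((f - fs) + (\<tau> * yv) *\<^sub>R kv)"
      by (rule power2_norm_eq_inner)
    also have "\<dots> = (f - fs) \<bullet> (f - fs) + 2 * \<tau> * (yv * ((f - fs) \<bullet> kv)) + \<tau>^2 * (yv * yv) * (kv \<bullet> kv)"
      by (simp add: inner_add_left inner_add_right power2_eq_square algebra_simps inner_commute)
    also have "\<dots> = D + 2 * \<tau> * (yv * ((f - fs) \<bullet> kv)) + \<tau>^2"
      by (simp add: D_def power2_norm_eq_inner kv y2)
    finally have d1: "D1 = D + 2 * \<tau> * (yv * ((f - fs) \<bullet> kv)) + \<tau>^2" .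
    have "yv * ((f - fs) \<bullet> kv) \<le> ls - l" using lf lsf by (simp add: inner_diff_left algebra_simps)
    then have "2 * \<tau> * (yv * ((f - fs) \<bullet> kv)) \<le> 2 * \<tau> * (ls - l)" using tp by (intro mult_left_mono) auto
    then have "D1 \<le> D - 2 * \<tau> * (l - ls) + \<tau>^2" using d1 by (simp add: algebra_simps)
    then have "l - ls \<le> \<rho> * (D - D1) / (2*\<eta>) + min l (\<eta> / (2*\<rho>))"
      by (intro core[OF lp l0(2) rp a(3) tau])
    moreover have "min l (\<eta> / (2*\<rho>)) \<le> c" unfolding c_def rho using minbound[OF lp a] .
    moreover have "(\<rho> * D1 + (1 - \<rho>) * D) / (2*\<eta>) = D/(2*\<eta>) - \<rho> * (D - D1) / (2*\<eta>)"
      using a by (simp add: field_simps)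
    ultimately show ?thesis by linarith
  qed
  then show ?thesis by (simp add: l_def ls_def \<rho>_def \<tau>_def D_def D1_def c_def)
qed

lemma spa_f_cong: "(\<forall>i<t. z i = z' i) \<Longrightarrow> spa_f \<alpha> \<beta> \<eta> kx y z t = spa_f \<alpha> \<beta> \<eta> kx y z' t"
  by (induction t) (simp_all add: Let_def)

lemma rho_range: "0 < \<alpha> \<Longrightarrow> \<alpha> \<le> \<beta> \<Longrightarrow> 0 \<le> spa_rho \<alpha> \<beta> kv yv f \<and> spa_rho \<alpha> \<beta> kv yv f \<le> 1"
  unfolding spa_rho_def hinge_def by (auto simp: min_def field_simps)

lemma mixlem: "(\<eta>::real) > 0 \<Longrightarrow> (S + L + A/(2*\<eta>)) * r + (S + L + B/(2*\<eta>)) * (1 - r) = S + (L + (r*A + (1-r)*B)/(2*\<eta>))"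
  by (simp add: field_simps)

lemma main_ind:
  fixes kx :: "nat \<Rightarrow> 'h::real_inner" and fs :: 'h
  assumes kx: "\<forall>t<n. kx t \<bullet> kx t = 1" and ys: "\<forall>t<n. y t \<in> {-1,1}"
    and a: "0<\<alpha>" "\<alpha>\<le>\<beta>" "0<\<eta>"
  shows "finite (set_pmf (spa_Z \<alpha> \<beta> \<eta> kx y n)) \<and>
    measure_pmf.expectation (spa_Z \<alpha> \<beta> \<eta> kx y n)
      (\<lambda>z. (\<Sum>t<n. hinge (kx t) (y t) (spa_f \<alpha> \<beta> \<eta> kx y z t) - hinge (kx t) (y t) fs)
           + (norm (spa_f \<alpha> \<beta> \<eta> kx y z n - fs))\<^sup>2 / (2*\<eta>))
    \<le> (norm fs)\<^sup>2 / (2*\<eta>) + real n * max (sqrt (\<eta>*\<beta>/2)) (\<eta>*\<beta>/(2*\<alpha>))"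
  using kx ys
proof (induction n)
  case 0
  then show ?case by simp
next
  case (Suc n)
  define c where "c = max (sqrt (\<eta>*\<beta>/2)) (\<eta>*\<beta>/(2*\<alpha>))"
  define F where "F = spa_f \<alpha> \<beta> \<eta> kx y"
  define G where "G = (\<lambda>m z. (\<Sum>t<m. hinge (kx t) (y t) (F z t) - hinge (kx t) (y t) fs)
           + (norm (F z m - fs))\<^sup>2 / (2*\<eta>))"
  define M where "M = spa_Z \<alpha> \<beta> \<eta> kx y n"
  define \<rho> where "\<rho> = (\<lambda>z. spa_rho \<alpha> \<beta> (kx n) (y n) (F z n))"
  define N where "N = (\<lambda>z. map_pmf (\<lambda>b. z(n := b)) (bernoulli_pmf (\<rho> z)))"
  have IH: "finite (set_pmf M)" "measure_pmf.expectation M (G n) \<le> (norm fs)\<^sup>2 / (2*\<eta>) + real n * c"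
    using Suc by (simp_all add: M_def G_def F_def c_def)
  have MS: "spa_Z \<alpha> \<beta> \<eta> kx y (Suc n) = bind_pmf M N"
    by (simp add: M_def N_def \<rho>_def F_def map_pmf_def)
  have finN: "finite (set_pmf (N z))" for z
    unfolding N_def by (simp add: finite_subset[of _ UNIV])
  have fin: "finite (set_pmf (bind_pmf M N))" using IH(1) finN by simp
  have rr: "0 \<le> \<rho> z" "\<rho> z \<le> 1" for z using rho_range[OF a(1,2), of "kx n" "y n" "F z n"] by (simp_all add: \<rho>_def)
  have inner: "measure_pmf.expectation (N z) (G (Suc n)) \<le> G n z + c" for z
  proof -
    have fc: "F (z(n:=b)) t = F z t" if "t \<le> n" for b t
      unfolding F_def using that by (intro spa_f_cong) auto
    have fs1: "F (z(n:=b)) (Suc n) = F z n + (spa_tau \<alpha> \<beta> \<eta> (kx n) (y n) (F z n) b * y n) *\<^sub>R kx n" for b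
      using fc[of n b] by (simp add: F_def Let_def)
    have Gb: "G (Suc n) (z(n:=b)) = (\<Sum>t<n. hinge (kx t) (y t) (F z t) - hinge (kx t) (y t) fs)
        + (hinge (kx n) (y n) (F z n) - hinge (kx n) (y n) fs)
        + (norm (F z n + (spa_tau \<alpha> \<beta> \<eta> (kx n) (y n) (F z n) b * y n) *\<^sub>R kx n - fs))\<^sup>2 / (2*\<eta>)" for b
      unfolding G_def using fc fs1 by simp
    have t0: "spa_tau \<alpha> \<beta> \<eta> (kx n) (y n) (F z n) False = 0" by (simp add: spa_tau_def)
    have "measure_pmf.expectation (N z) (G (Suc n)) =
       G (Suc n) (z(n:=True)) * \<rho> z + G (Suc n) (z(n:=False)) * (1 - \<rho> z)"
      unfolding N_def using rr by simp
    also have "\<dots> = (\<Sum>t<n. hinge (kx t) (y t) (F z t) - hinge (kx t) (y t) fs)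
       + (hinge (kx n) (y n) (F z n) - hinge (kx n) (y n) fs
       + (\<rho> z * (norm (F z n + (spa_tau \<alpha> \<beta> \<eta> (kx n) (y n) (F z n) True * y n) *\<^sub>R kx n - fs))\<^sup>2
          + (1 - \<rho> z) * (norm (F z n - fs))\<^sup>2) / (2*\<eta>))"
      unfolding Gb using t0 mixlem[of \<eta>] a(3) by simp
    also have "\<dots> \<le> (\<Sum>t<n. hinge (kx t) (y t) (F z t) - hinge (kx t) (y t) fs)
       + ((norm (F z n - fs))\<^sup>2/(2*\<eta>) + c)"
      unfolding \<rho>_def c_def
      by (intro add_left_mono step a) (use Suc.prems in auto)
    also have "\<dots> = G n z + c" by (simp add: G_def)
    finally show ?thesis .
  qed
  have "measure_pmf.expectation (bind_pmf M N) (G (Suc n))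
      = (\<Sum>a\<in>set_pmf M. pmf M a * measure_pmf.expectation (N a) (G (Suc n)))"
    using pmf_expectation_bind[of "set_pmf M" N M "G (Suc n)"] IH(1) finN by simp
  also have "\<dots> \<le> (\<Sum>a\<in>set_pmf M. pmf M a * (G n a + c))"
    by (intro sum_mono mult_left_mono inner) simp
  also have "\<dots> = (\<Sum>a\<in>set_pmf M. pmf M a * G n a) + c * (\<Sum>a\<in>set_pmf M. pmf M a)"
    by (simp add: algebra_simps sum.distrib sum_distrib_left)
  also have "(\<Sum>a\<in>set_pmf M. pmf M a) = 1" using IH(1) by (simp add: sum_pmf_eq_1)
  also have "(\<Sum>a\<in>set_pmf M. pmf M a * G n a) = measure_pmf.expectation M (G n)"
    using integral_measure_pmf[of "set_pmf M" M "G n"] IH(1) by simp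
  finally have "measure_pmf.expectation (bind_pmf M N) (G (Suc n)) \<le> (norm fs)\<^sup>2 / (2*\<eta>) + real (Suc n) * c"
    using IH(2) by (simp add: algebra_simps)
  then show ?case using fin MS by (simp add: G_def F_def c_def)
qed


theorem lemma1:
  fixes \<kappa> :: "real^'d \<Rightarrow> real^'d \<Rightarrow> real"
    and k :: "real^'d \<Rightarrow> 'h::{real_inner,complete_space}"
    and x :: "nat \<Rightarrow> real^'d" and y :: "nat \<Rightarrow> real"
    and T :: nat and \<alpha> \<beta> \<eta> :: real and fstar :: 'h
  assumes rkhs_dense: "closure (span (range k)) = UNIV"
    and kernel: "\<forall>u v. \<kappa> u v = k u \<bullet> k v"
    and diag: "\<forall>u. \<kappa> u u = 1"
    and T_pos: "T \<ge> 1"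
    and labels: "\<forall>t<T. y t \<in> {-1, 1}"
    and lipschitz: "\<forall>t<T. \<forall>f g. \<bar>hinge (k (x t)) (y t) f - hinge (k (x t)) (y t) g\<bar> \<le> norm (f - g)"
    and fstar_min: "\<forall>f. (\<Sum>t<T. hinge (k (x t)) (y t) fstar) \<le> (\<Sum>t<T. hinge (k (x t)) (y t) f)"
    and alpha_pos: "0 < \<alpha>" and alpha_le_beta: "\<alpha> \<le> \<beta>" and eta_pos: "0 < \<eta>"
  shows "measure_pmf.expectation (spa_Z \<alpha> \<beta> \<eta> (\<lambda>t. k (x t)) y T)
            (\<lambda>z. \<Sum>t<T. hinge (k (x t)) (y t) (spa_f \<alpha> \<beta> \<eta> (\<lambda>t. k (x t)) y z t)
                          - hinge (k (x t)) (y t) fstar)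
          < 1 / (2 * \<eta>) * (norm fstar)\<^sup>2 + \<eta> * \<beta> / min \<alpha> (sqrt (\<beta> * \<eta>)) * real T
       \<and> ((\<eta> = norm fstar * sqrt (\<alpha> / (2 * \<beta> * real T))
            \<and> \<alpha> ^ 3 \<le> \<beta> / (2 * real T) * (norm fstar)\<^sup>2)
          \<longrightarrow> measure_pmf.expectation (spa_Z \<alpha> \<beta> \<eta> (\<lambda>t. k (x t)) y T)
                (\<lambda>z. \<Sum>t<T. hinge (k (x t)) (y t) (spa_f \<alpha> \<beta> \<eta> (\<lambda>t. k (x t)) y z t)
                              - hinge (k (x t)) (y t) fstar)
              < norm fstar * sqrt (2 * \<beta> * real T / \<alpha>))"
proof -
  define kx where "kx = (\<lambda>t. k (x t))"
  define F where "F = norm fstar"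
  define c where "c = max (sqrt (\<eta>*\<beta>/2)) (\<eta>*\<beta>/(2*\<alpha>))"
  define b where "b = \<eta> * \<beta> / min \<alpha> (sqrt (\<beta> * \<eta>))"
  define M where "M = spa_Z \<alpha> \<beta> \<eta> kx y T"
  define S where "S = (\<lambda>z. \<Sum>t<T. hinge (kx t) (y t) (spa_f \<alpha> \<beta> \<eta> kx y z t) - hinge (kx t) (y t) fstar)"
  define E where "E = measure_pmf.expectation M S"
  have bp: "\<beta> > 0" using alpha_pos alpha_le_beta by simp
  have kk: "\<forall>t<T. kx t \<bullet> kx t = 1" using kernel diag by (simp add: kx_def)
  note mi = main_ind[OF kk labels alpha_pos alpha_le_beta eta_pos, of fstar]
  have finM: "finite (set_pmf M)" using mi by (simp add: M_def)
  have "E \<le> measure_pmf.expectation M (\<lambda>z. S z + (norm (spa_f \<alpha> \<beta> \<eta> kx y z T - fstar))\<^sup>2 / (2*\<eta>))"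
    unfolding E_def using finM eta_pos
    by (intro integral_mono integrable_measure_pmf_finite) auto
  also have "\<dots> \<le> F\<^sup>2 / (2*\<eta>) + real T * c"
    using mi by (simp add: M_def S_def F_def c_def)
  finally have E1: "E \<le> F\<^sup>2 / (2*\<eta>) + real T * c" .
  define m where "m = min \<alpha> (sqrt (\<beta> * \<eta>))"
  have mp: "m > 0" using alpha_pos bp eta_pos by (simp add: m_def)
  have "c < b"
  proof -
    have s1: "sqrt (\<eta>*\<beta>/2) < sqrt (\<beta>*\<eta>)" using bp eta_pos by (simp add: mult.commute)
    have "sqrt (\<beta>*\<eta>) * m \<le> sqrt (\<beta>*\<eta>) * sqrt (\<beta>*\<eta>)"
      using bp eta_pos by (intro mult_left_mono) (auto simp: m_def)
    also have "\<dots> = \<eta> * \<beta>" using bp eta_pos by simp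
    finally have s2: "sqrt (\<beta>*\<eta>) \<le> b" using mp by (simp add: b_def m_def[symmetric] field_simps)
    have "\<eta>*\<beta>/(2*\<alpha>) < \<eta>*\<beta>/\<alpha>" using bp eta_pos alpha_pos by (simp add: field_simps)
    also have "\<dots> \<le> b" unfolding b_def m_def[symmetric] using mp bp eta_pos
      by (intro divide_left_mono) (auto simp: m_def)
    finally have s3: "\<eta>*\<beta>/(2*\<alpha>) < b" .
    have s4: "sqrt (\<eta>*\<beta>/2) < b" using s1 s2 by linarith
    show ?thesis unfolding c_def using s3 s4 by (simp only: max_less_iff_conj)
  qed
  then have E2: "E < F\<^sup>2 / (2*\<eta>) + b * real T"
  proof -
    have "real T * c < real T * b" using \<open>c < b\<close> T_pos by (intro mult_strict_left_mono) auto
    then show ?thesis using E1 by (simp add: mult.commute)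
  qed
  have part2: "E < F * sqrt (2 * \<beta> * real T / \<alpha>)"
    if h1: "\<eta> = F * sqrt (\<alpha> / (2 * \<beta> * real T))" and h2: "\<alpha> ^ 3 \<le> \<beta> / (2 * real T) * F\<^sup>2"
  proof -
    define q where "q = sqrt (\<alpha> / (2 * \<beta> * real T))"
    have Tp: "real T > 0" using T_pos by simp
    have qp: "q > 0" using alpha_pos bp Tp by (simp add: q_def)
    have q2: "q^2 = \<alpha> / (2 * \<beta> * real T)" using alpha_pos bp Tp by (simp add: q_def)
    have Fp: "F > 0" using h1 eta_pos qp q_def F_def
      by (metis mult_eq_0_iff norm_ge_zero order_less_le)
    have eq: "\<eta> = F * q" using h1 q_def by simp
    have inv: "sqrt (2 * \<beta> * real T / \<alpha>) = 1 / q"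
      unfolding q_def using alpha_pos bp Tp by (simp add: real_sqrt_divide)
    have "(\<alpha>^2)^2 \<le> (\<beta> * \<eta>)^2"
    proof -
      have "(\<beta> * \<eta>)^2 = \<beta>^2 * F^2 * q^2" by (simp add: eq power_mult_distrib)
      also have "\<dots> = \<alpha> * (\<beta> / (2 * real T) * F\<^sup>2)" using q2 bp Tp by (simp add: field_simps power2_eq_square)
      also have "\<dots> \<ge> \<alpha> * \<alpha>^3" using h2 alpha_pos by (intro mult_left_mono) auto
      finally show ?thesis by (simp add: power_mult_distrib power2_eq_square power3_eq_cube algebra_simps)
    qed
    moreover have "0 \<le> \<beta> * \<eta>" using bp eta_pos by simp
    ultimately have "\<alpha>^2 \<le> \<beta> * \<eta>" by (rule power2_le_imp_le)
    then have "\<alpha> \<le> sqrt (\<beta> * \<eta>)" by (rule real_le_rsqrt)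
    then have bb: "b = \<eta> * \<beta> / \<alpha>" by (simp add: b_def min_def)
    have "F\<^sup>2 / (2*\<eta>) + b * real T = F / q"
    proof -
      have "b * real T = F * q * (\<beta> * real T / \<alpha>)" by (simp add: bb eq)
      also have "\<beta> * real T / \<alpha> = 1 / (2 * q^2)"
      proof -
        have aa: "\<alpha> = 2 * \<beta> * real T * q^2" using q2 alpha_pos bp Tp by (simp add: field_simps)
        show ?thesis unfolding aa using bp Tp qp by (simp add: field_simps)
      qed
      finally have "b * real T = F / (2*q)" using qp by (simp add: power2_eq_square field_simps)
      moreover have "F\<^sup>2 / (2*\<eta>) = F / (2*q)" using eq Fp qp by (simp add: power2_eq_square field_simps)
      moreover have "F/(2*q) + F/(2*q) = F/q" by (simp add: field_simps)
      ultimately show ?thesis by linarith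
    qed
    then show ?thesis using E2 inv by simp
  qed
  show ?thesis
    using E2 part2 by (simp add: E_def M_def S_def kx_def F_def b_def)
qed

end
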